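(* Let $Z\subset\mathbb{P}^n$ be a finite set and let $k$ be its Kruskal rank. If $\ell(Z)\le 2k-1$, then $Z$ is separated by forms of degree $2$, i.e. for every $P\in Z$ there is a homogeneous form of degree $2$ vanishing at every point of $Z\setminus\{P\}$ and not vanishing at $P$. Hence $\nu_2(Z)$ is linearly independent.
   Context: All spaces are complex projective. $\ell(Z)$ is the cardinality of $Z$. A finite set is linearly independent if representative vectors of its points are linearly independent. The Kruskal rank of $Z$ is the largest integer $k$ such that every subset of $Z$ of cardinality at most $k$ is linearly independent. $\nu_2:\mathbb{P}^n\to\mathbb{P}(Sym^2(\mathbb{C}^{n+1}))$ is the Veronese map $[L]\mapsto[L^2]$, $L$ a linear form. *)

theory Defs
  imports "HOL-Analysis.Analysis"
begin

text \<open>Points of complex projective space P^n are represented by nonzero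
representative vectors in complex^'n, where CARD('n) = n+1.  A finite set of
points Z is represented by a finite set of nonzero vectors, no two of which are
proportional (so distinct vectors represent distinct points).\<close>

definition proj_point_set :: "(complex^'n) set \<Rightarrow> bool" where
  "proj_point_set Z \<longleftrightarrow> 0 \<notin> Z \<and>
     (\<forall>u\<in>Z. \<forall>v\<in>Z. u \<noteq> v \<longrightarrow> \<not> (\<exists>c::complex. u = c *s v))"

definition lin_indep :: "(complex^'n) set \<Rightarrow> bool" where
  "lin_indep S \<longleftrightarrow> vec.independent S"

text \<open>Kruskal rank: the largest k such that every subset of Z of cardinality at
most k is linearly independent (capped by the cardinality of Z, so that it is
well defined when Z itself is independent).\<close>

definition kruskal_rank :: "(complex^'n) set \<Rightarrow> nat" where
  "kruskal_rank Z = (GREATEST k. k \<le> card Z \<and>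
      (\<forall>S. S \<subseteq> Z \<longrightarrow> card S \<le> k \<longrightarrow> lin_indep S))"

definition quad_form :: "complex^'n^'n \<Rightarrow> complex^'n \<Rightarrow> complex" where
  "quad_form A x = (\<Sum>i\<in>UNIV. \<Sum>j\<in>UNIV. A $ i $ j * x $ i * x $ j)"

text \<open>Veronese map nu_2 on representatives: the linear form L with coefficient
vector v is sent to L^2, represented as the symmetric tensor v (x) v with
coordinates v_i v_j in complex^('n \<times> 'n) (Sym^2 is a subspace of this).\<close>

definition veronese2 :: "complex^'n \<Rightarrow> complex^('n \<times> 'n)" where
  "veronese2 v = (\<chi> p. v $ fst p * v $ snd p)"

end

theory Submission imports Defs begin
lemma functional_exists:
  fixes P :: "complex^'n" and A :: "(complex^'n) set"
  assumes ind: "vec.independent (insert P A)" and PA: "P \<notin> A"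
  shows "\<exists>c::complex^'n. (\<forall>a\<in>A. (\<Sum>i\<in>UNIV. c$i * a$i) = 0) \<and> (\<Sum>i\<in>UNIV. c$i * P$i) \<noteq> 0"
proof -
  obtain B where B: "insert P A \<subseteq> B" "B \<subseteq> UNIV" "vec.independent B" "UNIV \<subseteq> vec.span B"
    by (rule vec.maximal_independent_subset_extend[OF subset_UNIV ind])
  define f where "f v = vec.representation B v P" for v
  have sp: "v \<in> vec.span B" for v using B(4) by blast
  have lin: "f v = (\<Sum>i\<in>UNIV. (\<chi> j. f (axis j 1)) $ i * v $ i)" for v
  proof -
    have "f v = f (\<Sum>i\<in>UNIV. v$i *s axis i 1)" by (simp add: basis_expansion)
    also have "\<dots> = (\<Sum>i\<in>UNIV. vec.representation B (v$i *s axis i 1) P)"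
      unfolding f_def by (subst vec.representation_sum[OF B(3)]) (auto simp: sp)
    also have "\<dots> = (\<Sum>i\<in>UNIV. v$i * f (axis i 1))"
      unfolding f_def by (subst vec.representation_scale[OF B(3) sp]) simp
    finally show ?thesis by (simp add: mult.commute)
  qed
  have "P \<in> B" using B by blast
  have fP: "f P = 1" unfolding f_def using vec.representation_basis[OF B(3) \<open>P \<in> B\<close>] by simp
  have fA: "f a = 0" if "a \<in> A" for a
  proof -
    have "a \<in> B" "a \<noteq> P" using B that PA by auto
    then show ?thesis unfolding f_def using vec.representation_basis[OF B(3) \<open>a \<in> B\<close>] by simp
  qed
  show ?thesis
  proof (rule exI[of _ "\<chi> j. f (axis j 1)"], intro conjI ballI)
    fix a assume "a \<in> A"
    then show "(\<Sum>i\<in>UNIV. (\<chi> j. f (axis j 1)) $ i * a $ i) = 0" using fA lin[of a] by simp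
  next
    show "(\<Sum>i\<in>UNIV. (\<chi> j. f (axis j 1)) $ i * P $ i) \<noteq> 0" using fP lin[of P] by simp
  qed
qed


lemma quad_prod: "quad_form (\<chi> i j. c$i * d$j) x = (\<Sum>i\<in>UNIV. c$i * x$i) * (\<Sum>j\<in>UNIV. d$j * x$j)"
  unfolding quad_form_def sum_product by (simp add: algebra_simps)

lemma quad_veronese: "(\<Sum>p\<in>UNIV. A $ fst p $ snd p * veronese2 x $ p) = quad_form A x"
proof -
  have "quad_form A x = (\<Sum>p\<in>UNIV \<times> UNIV. A $ fst p $ snd p * x $ fst p * x $ snd p)"
    unfolding quad_form_def by (subst sum.cartesian_product) (simp add: case_prod_beta)
  then show ?thesis unfolding veronese2_def by (simp add: UNIV_Times_UNIV algebra_simps)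
qed

lemma kr_prop:
  fixes Z :: "(complex^'n) set"
  assumes "finite Z"
  shows "\<forall>S. S \<subseteq> Z \<longrightarrow> card S \<le> kruskal_rank Z \<longrightarrow> lin_indep S"
proof -
  let ?Q = "\<lambda>k. k \<le> card Z \<and> (\<forall>S. S \<subseteq> Z \<longrightarrow> card S \<le> k \<longrightarrow> lin_indep S)"
  have "?Q 0" using assms by (auto simp: lin_indep_def card_eq_0_iff vec.independent_empty dest: finite_subset)
  then have "?Q (Greatest ?Q)" by (rule GreatestI_nat[where b="card Z"]) auto
  then show ?thesis unfolding kruskal_rank_def by blast
qed

theorem mainTheorem2:
  fixes Z :: "(complex^'n) set"
  assumes "finite Z"
    and "proj_point_set Z"
    and "card Z + 1 \<le> 2 * kruskal_rank Z"
  shows "(\<forall>P\<in>Z. \<exists>A :: complex^'n^'n.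
            (\<forall>Q\<in>Z - {P}. quad_form A Q = 0) \<and> quad_form A P \<noteq> 0)
         \<and> vec.independent (veronese2 ` Z)"
proof -
  define k where "k = kruskal_rank Z"
  have kr: "S \<subseteq> Z \<Longrightarrow> card S \<le> k \<Longrightarrow> vec.independent S" for S
    using kr_prop[OF assms(1)] unfolding k_def lin_indep_def by blast
  have sep: "\<exists>A :: complex^'n^'n. (\<forall>Q\<in>Z - {P}. quad_form A Q = 0) \<and> quad_form A P \<noteq> 0"
    if P: "P \<in> Z" for P
  proof -
    have fin: "finite (Z - {P})" using assms(1) by simp
    have cZ: "card (Z - {P}) = card Z - 1" using P assms(1) by simp
    obtain A1 where A1: "A1 \<subseteq> Z - {P}" "card A1 = min (k-1) (card Z - 1)"
      using obtain_subset_with_card_n[of "min (k-1) (card Z - 1)" "Z - {P}"] cZ by auto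
    define B1 where "B1 = Z - {P} - A1"
    have cB: "card B1 = card Z - 1 - card A1"
      unfolding B1_def using A1 fin cZ by (simp add: card_Diff_subset finite_subset)
    have "card B1 \<le> k - 1" using cB A1(2) assms(3) unfolding k_def by linarith
    have finA: "finite A1" "finite B1" using A1 fin finite_subset unfolding B1_def by auto
    have i1: "vec.independent (insert P A1)"
      apply (rule kr) using A1 P finA assms(3) unfolding k_def by (auto simp: card_insert_if) 
    have i2: "vec.independent (insert P B1)"
      apply (rule kr) using \<open>card B1 \<le> k - 1\<close> P finA assms(3) unfolding B1_def k_def by (auto simp: card_insert_if)
    obtain c where c: "\<forall>a\<in>A1. (\<Sum>i\<in>UNIV. c$i * a$i) = 0" "(\<Sum>i\<in>UNIV. c$i * P$i) \<noteq> 0"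
      using functional_exists[OF i1] A1 by blast
    obtain d where d: "\<forall>a\<in>B1. (\<Sum>i\<in>UNIV. d$i * a$i) = 0" "(\<Sum>i\<in>UNIV. d$i * P$i) \<noteq> 0"
      using functional_exists[OF i2] unfolding B1_def by blast
    show ?thesis
      apply (rule exI[of _ "\<chi> i j. c$i * d$j"])
      unfolding quad_prod using c d unfolding B1_def by auto
  qed
  have "\<not> vec.dependent (veronese2 ` Z)"
  proof
    assume "vec.dependent (veronese2 ` Z)"
    then obtain u where u: "\<exists>v\<in>veronese2 ` Z. u v \<noteq> 0" "(\<Sum>v\<in>veronese2 ` Z. u v *s v) = 0"
      using vec.dependent_finite[of "veronese2 ` Z"] assms(1) by blast
    then obtain P where P: "P \<in> Z" "u (veronese2 P) \<noteq> 0" by blast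
    obtain M :: "complex^'n^'n" where M: "\<forall>Q\<in>Z - {P}. quad_form M Q = 0" "quad_form M P \<noteq> 0"
      using sep[OF P(1)] by blast
    define F where "F w = (\<Sum>p\<in>UNIV. M $ fst p $ snd p * w $ p)" for w
    have FV: "F (veronese2 Q) = quad_form M Q" for Q unfolding F_def by (rule quad_veronese)
    have F0: "F w = 0" if "w \<in> veronese2 ` Z" "w \<noteq> veronese2 P" for w
      using that M FV by auto
    have "0 = F (\<Sum>v\<in>veronese2 ` Z. u v *s v)" using u(2) by (simp add: F_def)
    also have "\<dots> = (\<Sum>v\<in>veronese2 ` Z. u v * F v)"
    proof -
      have "F (\<Sum>v\<in>veronese2 ` Z. u v *s v) = (\<Sum>p\<in>UNIV. \<Sum>v\<in>veronese2 ` Z. M $ fst p $ snd p * (u v * v $ p))"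
        unfolding F_def by (simp add: sum_distrib_left)
      also have "\<dots> = (\<Sum>v\<in>veronese2 ` Z. \<Sum>p\<in>UNIV. M $ fst p $ snd p * (u v * v $ p))"
        by (rule sum.swap)
      also have "\<dots> = (\<Sum>v\<in>veronese2 ` Z. u v * F v)"
        unfolding F_def sum_distrib_left by (simp add: ac_simps)
      finally show ?thesis .
    qed
    also have "\<dots> = u (veronese2 P) * F (veronese2 P)"
      using assms(1) P F0 by (subst sum.remove[where x="veronese2 P"]) (auto intro!: sum.neutral)
    finally show False using P M FV by simp
  qed
  then show ?thesis using sep by blast
qed

end
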